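(* Let $Q\in\mathbb{S}^n$ with $Q_i>0$ for all $i$, and let $\widehat{P}\in\mathbb{S}^n$. Suppose the indices can be labeled so that $\frac{\widehat{P}_\ell}{Q_\ell}<\frac{\widehat{P}_k}{Q_k}\le\frac{\widehat{P}_i}{Q_i}$ for all $i\neq\ell$ (i.e. $\ell$ is the unique index minimizing $\widehat{P}_i/Q_i$ and $k$ attains the second smallest ratio). Then for every $\alpha\in[0,1)$ with $$1-\widehat{P}_\ell-\frac{\widehat{P}_k}{Q_k}(1-Q_\ell)\ \le\ \alpha\ \le\ \kappa(\widehat{P}\,\|\,Q),$$ the vector $$P^*_i=\begin{cases}\dfrac{Q_i\left(1-\frac{\widehat{P}_\ell}{1-\alpha}\right)}{1-Q_\ell}, & i\neq\ell,\\[2mm] \dfrac{\widehat{P}_\ell}{1-\alpha}, & i=\ell,\end{cases}$$ is the unique solution of the optimization problem $$\min_{P\in\mathbb{S}^n}\ \sum_iP_i\log\frac{P_i}{Q_i}\quad\text{subject to}\quad P_i\le\frac{\widehat{P}_i}{1-\alpha},\ i=1,\dots,n.$$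
   Context: $\mathbb{S}^n=\{P\in\mathbb{R}^n:\sum_iP_i=1,\ P_i\ge0\}$. The separation distance is $\kappa(\widehat{P}\|Q)=\max_{i}\left(1-\frac{\widehat{P}_i}{Q_i}\right)$, which here equals $1-\widehat{P}_\ell/Q_\ell$. *)

theory Defs
  imports Complex_Main
begin

text \<open>Probability simplex over a finite index type 'a (playing the role of {1..n}).\<close>
definition simplex :: "('a::finite \<Rightarrow> real) set" where
  "simplex = {P. (\<forall>i. P i \<ge> 0) \<and> (\<Sum>i\<in>UNIV. P i) = 1}"

definition KL :: "('a::finite \<Rightarrow> real) \<Rightarrow> ('a \<Rightarrow> real) \<Rightarrow> real" where
  "KL P Q = (\<Sum>i\<in>UNIV. if P i = 0 then 0 else P i * ln (P i / Q i))"

definition sep_dist :: "('a::finite \<Rightarrow> real) \<Rightarrow> ('a \<Rightarrow> real) \<Rightarrow> real" where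
  "sep_dist Ph Q = Max (range (\<lambda>i. 1 - Ph i / Q i))"

end

theory Submission
  imports Defs
begin

lemma term_ineq:
  fixes q s x w :: real
  assumes q: "q > 0" and s: "s \<ge> 0" and x: "x \<ge> 0"
    and w: "s > 0 \<Longrightarrow> w = ln (s / q)" and z: "s = 0 \<Longrightarrow> x = 0"
  shows "(if x = 0 then 0 else x * ln (x / q)) - ((if s = 0 then 0 else s * ln (s / q)) + (x - s) * (1 + w))
     \<ge> 0 \<and> (x \<noteq> s \<longrightarrow> (if x = 0 then 0 else x * ln (x / q)) - ((if s = 0 then 0 else s * ln (s / q)) + (x - s) * (1 + w)) > 0)"
proof (cases "s = 0")
  case True
  then show ?thesis using z by simp
next
  case False
  then have sp: "s > 0" using s by simp
  note wv = w[OF sp]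
  show ?thesis
  proof (cases "x = 0")
    case True
    then show ?thesis using sp wv by (simp add: algebra_simps)
  next
    case False
    then have xp: "x > 0" using x by simp
    have e: "(if x = 0 then 0 else x * ln (x / q)) - ((if s = 0 then 0 else s * ln (s / q)) + (x - s) * (1 + w))
        = x * (- ln (s / x) - 1 + s / x)"
    proof -
      have ls: "ln s = w + ln q" using wv sp q by (simp add: ln_div)
      show ?thesis using xp sp q by (simp add: ln_div ls algebra_simps)
    qed
    have l1: "ln (s / x) \<le> s / x - 1" using ln_le_minus_one[of "s/x"] xp sp by simp
    have l2: "x \<noteq> s \<Longrightarrow> ln (s / x) < s / x - 1"
    proof -
      assume ne: "x \<noteq> s"
      have "s / x \<noteq> 1" using ne xp by (auto simp: field_simps)
      then have "ln (s / x) \<noteq> s / x - 1" using ln_eq_minus_one[of "s/x"] xp sp by auto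
      then show ?thesis using l1 by simp
    qed
    show ?thesis unfolding e using l1 l2 xp by (auto intro: mult_nonneg_nonneg mult_pos_pos)
  qed
qed

theorem theorem5:
  fixes Q Ph :: "'a::finite \<Rightarrow> real" and l k :: 'a and \<alpha> :: real
  assumes "Q \<in> simplex" and "\<forall>i. Q i > 0"
    and "Ph \<in> simplex"
    and "Ph l / Q l < Ph k / Q k"
    and "\<forall>i. i \<noteq> l \<longrightarrow> Ph k / Q k \<le> Ph i / Q i"
    and "0 \<le> \<alpha>" and "\<alpha> < 1"
    and "1 - Ph l - Ph k / Q k * (1 - Q l) \<le> \<alpha>"
    and "\<alpha> \<le> sep_dist Ph Q"
  defines "Pstar \<equiv> (\<lambda>i. if i = l then Ph l / (1 - \<alpha>)
                        else Q i * (1 - Ph l / (1 - \<alpha>)) / (1 - Q l))"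
  shows "Pstar \<in> simplex \<and> (\<forall>i. Pstar i \<le> Ph i / (1 - \<alpha>)) \<and>
         (\<forall>P \<in> simplex. (\<forall>i. P i \<le> Ph i / (1 - \<alpha>)) \<longrightarrow> P \<noteq> Pstar \<longrightarrow>
              KL Pstar Q < KL P Q)"
proof -
  note A = assms
  define b where "b = 1 - \<alpha>"
  have bp: "b > 0" using A(7) b_def by simp
  define p where "p = Ph l / b"
  define g where "g = (1 - p) / (1 - Q l)"
  have Qp: "\<And>i. Q i > 0" using A(2) by auto
  have Qs: "(\<Sum>i\<in>UNIV. Q i) = 1" using A(1) by (simp add: simplex_def)
  have Phn: "\<And>i. Ph i \<ge> 0" using A(3) by (simp add: simplex_def)
  have Phs: "(\<Sum>i\<in>UNIV. Ph i) = 1" using A(3) by (simp add: simplex_def)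
  have kl: "k \<noteq> l" using A(4) by auto
  have splitQ: "(\<Sum>i\<in>UNIV. Q i) = Q l + (\<Sum>i\<in>UNIV - {l}. Q i)"
    by (simp add: sum.remove)
  have "Q k \<le> (\<Sum>i\<in>UNIV - {l}. Q i)"
    using kl Qp by (intro member_le_sum) (auto intro: less_imp_le)
  then have Ql1: "Q l < 1" using splitQ Qs Qp[of k] by simp
  have "sep_dist Ph Q \<in> range (\<lambda>i. 1 - Ph i / Q i)"
    unfolding sep_dist_def by (intro Max_in) auto
  then obtain j where j: "sep_dist Ph Q = 1 - Ph j / Q j" by auto
  have "Ph l / Q l \<le> Ph j / Q j"
    using A(4) A(5) by (cases "j = l") (auto dest: spec[of _ j])
  then have "\<alpha> \<le> 1 - Ph l / Q l" using A(9) j by simp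
  then have "Ph l / Q l \<le> b" using b_def by simp
  then have "Ph l \<le> b * Q l" using Qp[of l] by (simp add: field_simps)
  then have "b * p \<le> b * Q l" using bp p_def by simp
  then have pQ: "p \<le> Q l" using bp by simp
  have p0: "p \<ge> 0" using p_def bp Phn[of l] by simp
  have g1: "g \<ge> 1" unfolding g_def using pQ Ql1 by (subst le_divide_eq_1) auto
  have Ps_l: "Pstar l = p" using Pstar_def p_def b_def by simp
  have Ps_o: "\<And>i. i \<noteq> l \<Longrightarrow> Pstar i = Q i * g" using Pstar_def p_def b_def g_def by simp
  have Psn: "\<And>i. Pstar i \<ge> 0"
    using Ps_l Ps_o p0 g1 Qp by (metis less_imp_le mult_nonneg_nonneg order.trans zero_le_one)
  have "(\<Sum>i\<in>UNIV. Pstar i) = Pstar l + (\<Sum>i\<in>UNIV - {l}. Pstar i)"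
    by (simp add: sum.remove)
  also have "(\<Sum>i\<in>UNIV - {l}. Pstar i) = (\<Sum>i\<in>UNIV - {l}. Q i) * g"
    using Ps_o by (simp add: sum_distrib_right)
  also have "(\<Sum>i\<in>UNIV - {l}. Q i) = 1 - Q l" using splitQ Qs by simp
  finally have "(\<Sum>i\<in>UNIV. Pstar i) = 1" using Ps_l g_def Ql1 by simp
  then have S1: "Pstar \<in> simplex" using Psn by (simp add: simplex_def)
  have "b - Ph l \<le> Ph k / Q k * (1 - Q l)" using A(8) b_def by simp
  then have "(b - Ph l) / b \<le> Ph k / Q k * (1 - Q l) / b" using bp by (intro divide_right_mono) auto
  moreover have "(b - Ph l) / b = 1 - p" using bp p_def by (simp add: diff_divide_distrib)
  ultimately have "1 - p \<le> Ph k / Q k * (1 - Q l) / b" by simp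
  then have "g \<le> Ph k / Q k * (1 - Q l) / b / (1 - Q l)" unfolding g_def using Ql1 by (intro divide_right_mono) auto
  also have "\<dots> = Ph k / Q k / b" using Ql1 by simp
  finally have gk: "g \<le> Ph k / Q k / b" .
  have C: "\<forall>i. Pstar i \<le> Ph i / (1 - \<alpha>)"
  proof
    fix i
    show "Pstar i \<le> Ph i / (1 - \<alpha>)"
    proof (cases "i = l")
      case True then show ?thesis using Ps_l p_def b_def by simp
    next
      case False
      have "Ph k / Q k / b \<le> Ph i / Q i / b" using A(5) False bp by (intro divide_right_mono) auto
      then have "g \<le> Ph i / Q i / b" using gk by simp
      then have "Q i * g \<le> Ph i / b" using Qp[of i] bp by (simp add: field_simps)
      then show ?thesis using Ps_o False b_def by simp
    qed
  qed
  have Opt: "\<forall>P \<in> simplex. (\<forall>i. P i \<le> Ph i / (1 - \<alpha>)) \<longrightarrow> P \<noteq> Pstar \<longrightarrow> KL Pstar Q < KL P Q"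
  proof (intro ballI impI)
    fix P assume P: "P \<in> simplex" and Pc: "\<forall>i. P i \<le> Ph i / (1 - \<alpha>)" and ne: "P \<noteq> Pstar"
    have Pn: "\<And>i. P i \<ge> 0" and Ps: "(\<Sum>i\<in>UNIV. P i) = 1" using P by (auto simp: simplex_def)
    have Pl: "P l \<le> p" using Pc p_def b_def by simp
    define d where "d = (if p > 0 then ln (p / Q l) - ln g else 0)"
    define w where "w = (\<lambda>i. ln g + (if i = l then d else 0))"
    have d0: "d \<le> 0"
    proof (cases "p > 0")
      case True
      have "ln (p / Q l) \<le> 0" using True pQ Qp[of l] by (simp add: ln_div)
      moreover have "ln g \<ge> 0" using g1 by simp
      ultimately show ?thesis using True d_def by simp
    qed (simp add: d_def)
    define f where "f = (\<lambda>x q. if x = 0 then 0 else x * ln (x / q :: real))"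
    define D where "D = (\<lambda>i. f (P i) (Q i) - (f (Pstar i) (Q i) + (P i - Pstar i) * (1 + w i)))"
    have TI: "\<And>i. D i \<ge> 0 \<and> (P i \<noteq> Pstar i \<longrightarrow> D i > 0)"
    proof -
      fix i
      have wi: "Pstar i > 0 \<Longrightarrow> w i = ln (Pstar i / Q i)"
      proof -
        assume pos: "Pstar i > 0"
        show "w i = ln (Pstar i / Q i)"
        proof (cases "i = l")
          case True
          then have "p > 0" using pos Ps_l by simp
          then show ?thesis using True w_def d_def Ps_l by simp
        next
          case False
          then show ?thesis using w_def Ps_o Qp[of i] by simp
        qed
      qed
      have zi: "Pstar i = 0 \<Longrightarrow> P i = 0"
      proof -
        assume z: "Pstar i = 0"
        have "i = l" using z Ps_o Qp[of i] g1 by (cases "i = l") auto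
        then show "P i = 0" using z Ps_l Pl Pn[of l] by simp
      qed
      show "D i \<ge> 0 \<and> (P i \<noteq> Pstar i \<longrightarrow> D i > 0)"
        unfolding D_def f_def using term_ineq[OF Qp[of i] Psn[of i] Pn[of i] wi zi] by simp
    qed
    obtain i0 where i0: "P i0 \<noteq> Pstar i0" using ne by auto
    have "(\<Sum>i\<in>UNIV. D i) > 0"
      using TI i0 by (intro sum_pos2[where i=i0]) auto
    moreover have "(\<Sum>i\<in>UNIV. D i) = KL P Q - KL Pstar Q - (\<Sum>i\<in>UNIV. (P i - Pstar i) * (1 + w i))"
      unfolding D_def KL_def f_def by (simp add: sum_subtractf sum.distrib)
    moreover have "(\<Sum>i\<in>UNIV. (P i - Pstar i) * (1 + w i))
        = (\<Sum>i\<in>UNIV. (P i - Pstar i)) * (1 + ln g) + (P l - p) * d"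
    proof -
      have "(\<Sum>i\<in>UNIV. (P i - Pstar i) * (1 + w i))
          = (\<Sum>i\<in>UNIV. (P i - Pstar i) * (1 + ln g) + (if i = l then (P l - p) * d else 0))"
        using Ps_l by (intro sum.cong) (auto simp: w_def algebra_simps)
      also have "\<dots> = (\<Sum>i\<in>UNIV. (P i - Pstar i)) * (1 + ln g) + (P l - p) * d"
        by (simp add: sum.distrib sum_distrib_right)
      finally show ?thesis .
    qed
    moreover have "(\<Sum>i\<in>UNIV. (P i - Pstar i)) = 0"
      using Ps \<open>(\<Sum>i\<in>UNIV. Pstar i) = 1\<close> by (simp add: sum_subtractf)
    moreover have "(P l - p) * d \<ge> 0" using Pl d0 by (simp add: mult_nonpos_nonpos)
    ultimately have "0 < KL P Q - KL Pstar Q - (P l - p) * d" "0 \<le> (P l - p) * d" by simp_all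
    then show "KL Pstar Q < KL P Q" by linarith
  qed
  show ?thesis using S1 C Opt by blast
qed

end
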